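(* Fix $0<\varepsilon<1$ and $K\in\mathbb N$. For all sufficiently large $N$ (relative to $\varepsilon,K$), there is an $N$-vertex graph $F$ with average degree at least $N^{\varepsilon}$ satisfying the following: if $H$ is a subgraph of $F$ with all degrees lying in the range $[d',Kd']$, then $$d'\le \frac{64K^3 N^{\varepsilon}}{\lfloor (1-\varepsilon)\log N-2\rfloor}.$$
   Context: Logarithms are base 2. $\mathbb N=\{1,2,\dots\}$. *)

theory Defs
  imports Complex_Main
begin

definition simple_graph :: "'a set \<Rightarrow> 'a set set \<Rightarrow> bool" where
  "simple_graph V E \<longleftrightarrow> finite V \<and> (\<forall>e\<in>E. e \<subseteq> V \<and> card e = 2)"

definition degree :: "'a set set \<Rightarrow> 'a \<Rightarrow> nat" where
  "degree E v = card {e \<in> E. v \<in> e}"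

definition avg_degree :: "'a set \<Rightarrow> 'a set set \<Rightarrow> real" where
  "avg_degree V E = 2 * real (card E) / real (card V)"

definition subgraph :: "'a set \<Rightarrow> 'a set set \<Rightarrow> 'a set \<Rightarrow> 'a set set \<Rightarrow> bool" where
  "subgraph W E' V E \<longleftrightarrow> W \<subseteq> V \<and> E' \<subseteq> E \<and> (\<forall>e\<in>E'. e \<subseteq> W)"

end

theory Submission
  imports Defs "HOL-Library.FuncSet" "HOL-Real_Asymp.Real_Asymp"
begin

lemma pow_le_exp_fact: "real g ^ g \<le> exp (real g) * fact g"
proof -
  have "(\<lambda>n. real g ^ n /\<^sub>R fact n) sums exp (real g)" by (rule exp_converges)
  hence sm: "summable (\<lambda>n. real g ^ n /\<^sub>R fact n)" and eq: "exp (real g) = (\<Sum>n. real g ^ n /\<^sub>R fact n)"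
    by (auto simp: sums_iff)
  have "sum (\<lambda>n. real g ^ n /\<^sub>R fact n) {g} \<le> (\<Sum>n. real g ^ n /\<^sub>R fact n)"
    by (rule sum_le_suminf[OF sm]) auto
  hence "real g ^ g / fact g \<le> exp (real g)" using eq by (simp add: divide_inverse mult.commute)
  thus ?thesis by (simp add: divide_le_eq)
qed

lemma pow_le_3_fact: "real g ^ g \<le> 3 ^ g * fact g"
proof -
  have "exp (real g) = exp 1 ^ g" using exp_of_nat_mult[of g 1] by simp
  also have "\<dots> \<le> 3 ^ g" by (rule power_mono[OF exp_le]) auto
  finally show ?thesis using pow_le_exp_fact[of g]
    by (meson dual_order.trans fact_ge_zero mult_right_mono)
qed

lemma choose_bound:
  assumes "s \<ge> 1"
  shows "real (s choose g) * (real g / (6 * real s)) ^ g \<le> (1/2) ^ g"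
proof -
  have a: "real (s choose g) * fact g \<le> real s ^ g"
    using binomial_fact_pow[of s g] by (metis of_nat_fact of_nat_le_iff of_nat_mult of_nat_power)
  have sp: "real s > 0" using assms by simp
  have fp: "(fact g :: real) > 0" by simp
  have e1: "(real g / (6 * real s)) ^ g = real g ^ g / (6^g * real s ^ g)"
    by (simp add: power_divide power_mult_distrib)
  have b: "real g ^ g \<le> 3 ^ g * fact g" by (rule pow_le_3_fact)
  have "real (s choose g) * real g ^ g \<le> real (s choose g) * (3 ^ g * fact g)"
    using b by (intro mult_left_mono) auto
  also have "\<dots> = 3 ^ g * (real (s choose g) * fact g)" by simp
  also have "\<dots> \<le> 3 ^ g * real s ^ g" using a by (intro mult_left_mono) auto
  finally have c: "real (s choose g) * real g ^ g \<le> 3 ^ g * real s ^ g" .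
  have pos: "(6::real)^g * real s ^ g > 0" using sp by simp
  have "real (s choose g) * (real g / (6 * real s)) ^ g = real (s choose g) * real g ^ g / (6^g * real s ^ g)"
    unfolding e1 by simp
  also have "\<dots> \<le> 3 ^ g * real s ^ g / (6^g * real s ^ g)"
    using c pos by (intro divide_right_mono) auto
  also have "3 ^ g * real s ^ g / (6^g * real s ^ g) = (3::real) ^ g / 6 ^ g"
    using sp by (simp del: of_nat_power)
  also have "(3::real) ^ g / 6 ^ g = (1/2) ^ g" by (simp add: power_divide[symmetric])
  finally show ?thesis .
qed

lemma choose_le_pow: "n choose r \<le> n ^ r"
  by (cases "r \<le> n") (auto simp: binomial_le_pow binomial_eq_0)

lemma sum_mod_rep:
  fixes t L :: nat and h :: "nat \<Rightarrow> nat"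
  shows "(\<Sum>j<t*L. h (j mod L)) = t * (\<Sum>i<L. h i)"
proof (induction t)
  case 0 then show ?case by simp
next
  case (Suc t)
  have u: "{..<Suc t * L} = {..<t*L} \<union> {t*L..<t*L+L}" by auto
  have "(\<Sum>j\<in>{t*L..<t*L+L}. h (j mod L)) = (\<Sum>j\<in>{0+t*L..<L+t*L}. h (j mod L))" by (simp add: add.commute)
  also have "\<dots> = (\<Sum>i\<in>{0..<L}. h ((i + t*L) mod L))" by (rule sum.shift_bounds_nat_ivl)
  also have "\<dots> = (\<Sum>i<L. h i)" by (intro sum.cong) (auto simp: lessThan_atLeast0)
  finally have "(\<Sum>j\<in>{t*L..<t*L+L}. h (j mod L)) = (\<Sum>i<L. h i)" .
  then show ?case unfolding u by (subst sum.union_disjoint) (auto simp: Suc)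
qed

lemma geom_sub:
  fixes X :: real
  assumes X0: "0 \<le> X"
  shows "real (\<Sum>i\<in>{i. i<L \<and> real (2^i) < X}. (2::nat)^i) \<le> 2 * X"
proof (cases "{i. i<L \<and> real (2^i) < X} = {}")
  case True
  have "real (\<Sum>i\<in>{i. i<L \<and> real (2^i) < X}. (2::nat)^i) = 0" unfolding True by simp
  then show ?thesis using X0 by simp
next
  case False
  define A where "A = {i. i<L \<and> real (2^i) < X}"
  have fin: "finite A" unfolding A_def by auto
  define p where "p = Max A"
  have pA: "p \<in> A" using False fin unfolding p_def A_def by (intro Max_in) auto
  have sub: "A \<subseteq> {..<Suc p}" using fin unfolding p_def by (auto simp: less_Suc_eq_le)
  have "(\<Sum>i\<in>A. (2::nat)^i) \<le> (\<Sum>i<Suc p. 2^i)" by (rule sum_mono2[OF _ sub]) auto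
  also have "(\<Sum>i<Suc p. (2::nat)^i) = 2^Suc p - 1" by (induction p) auto
  finally have "real (\<Sum>i\<in>A. (2::nat)^i) \<le> real ((2::nat)^Suc p - 1)" by linarith
  also have "\<dots> \<le> 2 * real ((2::nat)^p)" by simp
  also have "\<dots> \<le> 2 * X" using pA unfolding A_def by auto
  finally show ?thesis unfolding A_def .
qed

lemma con_card:
  fixes l nY g :: nat and m :: "nat \<Rightarrow> nat" and R :: "(nat \<times> nat) set"
    and T :: "nat \<times> nat \<Rightarrow> nat set" and M :: real
  assumes R: "R \<subseteq> Sigma {..<l} (\<lambda>j. {..<m j})"
    and T: "\<And>jb. jb \<in> R \<Longrightarrow> T jb \<subseteq> {..<nY} \<and> card (T jb) = g"
    and M: "0 \<le> M" "\<And>j b. (j,b) \<in> R \<Longrightarrow> M \<le> real (m j)"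
  shows "real (card {f\<in>PiE ({..<l} \<times> {..<nY}) (\<lambda>(j,y). {..<m j}). \<forall>(j,b)\<in>R. \<forall>y\<in>T (j,b). f (j,y) = b})
           * M ^ (g * card R) \<le> real (card (PiE ({..<l} \<times> {..<nY}) (\<lambda>(j,y). {..<m j})))"
proof -
  define I where "I = {..<l} \<times> {..<nY}"
  define A where "A = (\<lambda>(j::nat,y::nat). {..<m j})"
  define Om where "Om = PiE I A"
  define Con where "Con = {f\<in>Om. \<forall>(j,b)\<in>R. \<forall>y\<in>T (j,b). f (j,y) = b}"
  have finI: "finite I" unfolding I_def by auto
  have finR: "finite R" using R by (rule finite_subset) auto
  have eq: "{f\<in>PiE ({..<l} \<times> {..<nY}) (\<lambda>(j,y). {..<m j}). \<forall>(j,b)\<in>R. \<forall>y\<in>T (j,b). f (j,y) = b} = Con"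
    unfolding Con_def Om_def I_def A_def by simp
  have eq2: "PiE ({..<l} \<times> {..<nY}) (\<lambda>(j,y). {..<m j}) = Om" unfolding Om_def I_def A_def by simp
  have main: "real (card Con) * M ^ (g * card R) \<le> real (card Om)"
  proof (cases "Con = {}")
    case True
    then show ?thesis by simp
  next
    case False
    then obtain f0 where f0: "f0 \<in> Con" by auto
    define P where "P = (\<Union>jb\<in>R. {fst jb} \<times> T jb)"
    have PI: "P \<subseteq> I" unfolding P_def I_def using R T by fastforce
    have f0v: "\<And>j b y. (j,b) \<in> R \<Longrightarrow> y \<in> T (j,b) \<Longrightarrow> f0 (j,y) = b"
      using f0 unfolding Con_def by blast
    have sub: "Con \<subseteq> PiE I (\<lambda>i. if i \<in> P then {f0 i} else A i)"
    proof
      fix f assume f: "f \<in> Con"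
      hence fO: "f \<in> PiE I A" unfolding Con_def Om_def by auto
      have fv: "\<And>j b y. (j,b) \<in> R \<Longrightarrow> y \<in> T (j,b) \<Longrightarrow> f (j,y) = b"
        using f unfolding Con_def by blast
      show "f \<in> PiE I (\<lambda>i. if i \<in> P then {f0 i} else A i)"
      proof (rule PiE_I)
        fix i assume iI: "i \<in> I"
        show "f i \<in> (if i \<in> P then {f0 i} else A i)"
        proof (cases "i \<in> P")
          case True
          then obtain j b y where "(j,b) \<in> R" "y \<in> T (j,b)" "i = (j,y)" unfolding P_def by auto
          then show ?thesis using fv f0v True by auto
        next
          case False then show ?thesis using fO iI by (auto simp: PiE_iff)
        qed
      next
        fix i assume "i \<notin> I" then show "f i = undefined" using fO PiE_arb by metis
      qed
    qed
    have f0A: "\<And>i. i \<in> I \<Longrightarrow> f0 i \<in> A i" using f0 unfolding Con_def Om_def by (auto simp: PiE_iff)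
    have cOm: "card Om = (\<Prod>i\<in>I - P. card (A i)) * (\<Prod>i\<in>P. card (A i))"
      unfolding Om_def using finI PI by (simp add: card_PiE prod.subset_diff)
    have "card (PiE I (\<lambda>i. if i \<in> P then {f0 i} else A i)) = (\<Prod>i\<in>I. card (if i \<in> P then {f0 i} else A i))"
      using finI by (simp add: card_PiE)
    also have "\<dots> = (\<Prod>i\<in>I - P. card (if i \<in> P then {f0 i} else A i)) * (\<Prod>i\<in>P. card (if i \<in> P then {f0 i} else A i))"
      using finI PI by (simp add: prod.subset_diff)
    also have "\<dots> = (\<Prod>i\<in>I - P. card (A i))" by simp
    finally have cC': "card (PiE I (\<lambda>i. if i \<in> P then {f0 i} else A i)) = (\<Prod>i\<in>I - P. card (A i))" .
    have finC': "finite (PiE I (\<lambda>i. if i \<in> P then {f0 i} else A i))"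
      using finI by (intro finite_PiE) (auto simp: A_def)
    have cC: "card Con \<le> (\<Prod>i\<in>I - P. card (A i))" using card_mono[OF finC' sub] cC' by simp
    have finP: "finite P" using PI finI finite_subset by blast
    have cP: "card P = g * card R"
    proof -
      have "card P = (\<Sum>jb\<in>R. card ({fst jb} \<times> T jb))" unfolding P_def
      proof (rule card_UN_disjoint[OF finR])
        show "\<forall>jb\<in>R. finite ({fst jb} \<times> T jb)"
        proof
          fix jb assume "jb \<in> R"
          hence "T jb \<subseteq> {..<nY}" using T by blast
          hence "finite (T jb)" using finite_subset by blast
          thus "finite ({fst jb} \<times> T jb)" by simp
        qed
        show "\<forall>jb\<in>R. \<forall>jb'\<in>R. jb \<noteq> jb' \<longrightarrow> {fst jb} \<times> T jb \<inter> {fst jb'} \<times> T jb' = {}"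
        proof (intro ballI impI)
          fix jb jb' assume a: "jb \<in> R" "jb' \<in> R" "jb \<noteq> jb'"
          show "{fst jb} \<times> T jb \<inter> {fst jb'} \<times> T jb' = {}"
          proof (rule ccontr)
            assume "{fst jb} \<times> T jb \<inter> {fst jb'} \<times> T jb' \<noteq> {}"
            then obtain y where y: "y \<in> T jb" "y \<in> T jb'" "fst jb = fst jb'" by auto
            have "f0 (fst jb, y) = snd jb" using f0v[of "fst jb" "snd jb" y] a(1) y(1) by (metis prod.collapse)
            moreover have "f0 (fst jb', y) = snd jb'" using f0v[of "fst jb'" "snd jb'" y] a(2) y(2) by (metis prod.collapse)
            ultimately show False using a y by (metis prod.collapse)
          qed
        qed
      qed
      also have "\<dots> = (\<Sum>jb\<in>R. g)" using T by (intro sum.cong) (auto simp: card_cartesian_product)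
      finally show ?thesis by simp
    qed
    have "M ^ (g * card R) = (\<Prod>i\<in>P. M)" using cP by simp
    also have "\<dots> \<le> (\<Prod>i\<in>P. real (card (A i)))"
    proof (rule prod_mono)
      fix i assume "i \<in> P"
      then obtain j b y where "(j,b) \<in> R" "i = (j,y)" unfolding P_def by auto
      then show "0 \<le> M \<and> M \<le> real (card (A i))" using M by (auto simp: A_def)
    qed
    finally have MP: "M ^ (g * card R) \<le> real (\<Prod>i\<in>P. card (A i))" by simp
    have "real (card Con) * M ^ (g * card R) \<le> real (\<Prod>i\<in>I - P. card (A i)) * real (\<Prod>i\<in>P. card (A i))"
    proof (rule mult_mono)
      show "real (card Con) \<le> real (\<Prod>i\<in>I - P. card (A i))" using cC by (simp only: of_nat_le_iff)
    qed (use MP M(1) in \<open>auto intro: prod_nonneg\<close>)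
    also have "\<dots> = real (card Om)" using cOm by simp
    finally show ?thesis .
  qed
  show ?thesis using main by (simp only: eq2 Con_def)
qed

lemma card_UN_le_real:
  assumes "finite I"
  shows "real (card (\<Union>i\<in>I. A i)) \<le> (\<Sum>i\<in>I. real (card (A i)))"
proof -
  have "real (card (\<Union>i\<in>I. A i)) \<le> real (\<Sum>i\<in>I. card (A i))"
    using card_UN_le[OF assms, of A] by (simp only: of_nat_le_iff)
  also have "\<dots> = (\<Sum>i\<in>I. real (card (A i)))" by (rule of_nat_sum)
  finally show ?thesis .
qed

lemma counting:
  fixes nY l g0 K N :: nat and m :: "nat \<Rightarrow> nat"
  assumes m_pos: "\<And>j. 0 < m j" and K: "1 \<le> K" and g0: "1 \<le> g0"
    and det: "\<And>s. 1 \<le> s \<Longrightarrow>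
        2 * real K * real (\<Sum>j\<in>{j. j<l \<and> real g0 * real (m j) < 6 * real s}. m j) \<le> real s"
    and NY: "nY \<le> N" and NB: "card (Sigma {..<l} (\<lambda>j. {..<m j})) \<le> N"
    and big: "real N ^ (2*K+2) < 2 ^ g0"
  shows "\<exists>f \<in> PiE ({..<l} \<times> {..<nY}) (\<lambda>(j,y). {..<m j}). \<forall>S. S \<subseteq> {..<nY} \<and> S \<noteq> {} \<longrightarrow>
      real K * real (card {(j,b)\<in>Sigma {..<l} (\<lambda>j. {..<m j}). g0 \<le> card {y\<in>S. f (j,y) = b}}) < real (card S)"
proof -
  define I where "I = {..<l} \<times> {..<nY}"
  define Om where "Om = PiE I (\<lambda>(j,y). {..<m j})"
  define Blk where "Blk = Sigma {..<l} (\<lambda>j. {..<m j})"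
  define rich where "rich f S = {(j,b)\<in>Blk. g0 \<le> card {y\<in>S. f (j,y) = b}}" for f :: "nat \<times> nat \<Rightarrow> nat" and S :: "nat set"
  define Small where "Small s = {(j,b)\<in>Blk. 6 * real s \<le> real g0 * real (m j)}" for s :: nat
  define r where "r s = nat \<lceil>real s / (2 * real K)\<rceil>" for s :: nat
  define Con where "Con R T = {f\<in>Om. \<forall>(j,b)\<in>R. \<forall>y\<in>T (j,b). f (j,y) = b}" for R :: "(nat \<times> nat) set" and T :: "nat \<times> nat \<Rightarrow> nat set"
  define Bad where "Bad = {f\<in>Om. \<exists>S. S \<subseteq> {..<nY} \<and> S \<noteq> {} \<and> real (card S) \<le> real K * real (card (rich f S))}"
  define SS where "SS s = {S. S \<subseteq> {..<nY} \<and> card S = s}" for s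
  define RR where "RR s = {R. R \<subseteq> Small s \<and> card R = r s}" for s
  define TT where "TT R S = PiE R (\<lambda>_. {T. T \<subseteq> S \<and> card T = g0})" for R :: "(nat \<times> nat) set" and S :: "nat set"
  define Wit where "Wit = (\<Union>s\<in>{1..nY}. \<Union>S\<in>SS s. \<Union>R\<in>RR s. \<Union>T\<in>TT R S. Con R T)"
  have finI: "finite I" unfolding I_def by auto
  have finBlk: "finite Blk" unfolding Blk_def by auto
  have finOm: "finite Om" unfolding Om_def using finI by (intro finite_PiE) auto
  have cOm: "card Om > 0"
    unfolding Om_def using finI m_pos by (simp add: card_PiE prod_pos split: prod.splits)
  have Kp: "real K > 0" using K by simp
  have r_ge: "real s \<le> 2 * real K * real (r s)" for s
  proof -
    have z0: "0 \<le> real s / (2 * real K)" using Kp by simp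
    have z: "0 \<le> \<lceil>real s / (2 * real K)\<rceil>" using z0 by linarith
    have "real s / (2 * real K) \<le> of_int \<lceil>real s / (2 * real K)\<rceil>" by (rule le_of_int_ceiling)
    also have "\<dots> = real (r s)" unfolding r_def using z by simp
    finally have "real s / (2 * real K) \<le> real (r s)" .
    thus ?thesis using Kp by (simp add: divide_le_eq mult.commute)
  qed
  have r_le: "r s \<le> c" if "real s \<le> 2 * real K * real c" for s c
  proof -
    have "real s / (2 * real K) \<le> real c" using that Kp by (simp add: divide_le_eq mult.commute)
    thus ?thesis unfolding r_def by (simp add: nat_le_iff ceiling_le_iff)
  qed
  have r_pos: "1 \<le> r s" if "1 \<le> s" for s
  proof -
    have "real s / (2 * real K) > 0" using that Kp by simp
    hence "\<lceil>real s / (2 * real K)\<rceil> \<ge> 1" by simp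
    hence "nat 1 \<le> nat \<lceil>real s / (2 * real K)\<rceil>" by (rule nat_mono)
    thus ?thesis unfolding r_def by simp
  qed
  have sub: "Bad \<subseteq> Wit"
  proof
    fix f assume "f \<in> Bad"
    then obtain S where f: "f \<in> Om" and S: "S \<subseteq> {..<nY}" "S \<noteq> {}"
      and c: "real (card S) \<le> real K * real (card (rich f S))" unfolding Bad_def by blast
    define s where "s = card S"
    have finS: "finite S" using S(1) finite_subset by blast
    have s1: "1 \<le> s" using S finS unfolding s_def by (simp add: Suc_leI card_gt_0_iff)
    have s2: "s \<le> nY" unfolding s_def using card_mono[OF _ S(1)] by simp
    have lg: "rich f S - Small s \<subseteq> Sigma {j. j<l \<and> real g0 * real (m j) < 6 * real s} (\<lambda>j. {..<m j})"
      unfolding rich_def Small_def Blk_def by auto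
    have "card (rich f S - Small s) \<le> card (Sigma {j. j<l \<and> real g0 * real (m j) < 6 * real s} (\<lambda>j. {..<m j}))"
      by (rule card_mono[OF _ lg]) auto
    also have "\<dots> = (\<Sum>j\<in>{j. j<l \<and> real g0 * real (m j) < 6 * real s}. m j)" by (subst card_SigmaI) auto
    finally have h1: "card (rich f S - Small s) \<le> (\<Sum>j\<in>{j. j<l \<and> real g0 * real (m j) < 6 * real s}. m j)" .
    have "2 * real K * real (card (rich f S - Small s)) \<le> 2 * real K * real (\<Sum>j\<in>{j. j<l \<and> real g0 * real (m j) < 6 * real s}. m j)"
    proof (rule mult_left_mono)
      show "real (card (rich f S - Small s)) \<le> real (\<Sum>j\<in>{j. j<l \<and> real g0 * real (m j) < 6 * real s}. m j)"
        using h1 by (simp only: of_nat_le_iff)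
    qed (use Kp in simp)
    hence hb: "2 * real K * real (card (rich f S - Small s)) \<le> real s" using det[OF s1] by linarith
    have eqr: "rich f S = (rich f S \<inter> Small s) \<union> (rich f S - Small s)" by blast
    have "card (rich f S) \<le> card (rich f S \<inter> Small s) + card (rich f S - Small s)"
      by (subst eqr) (rule card_Un_le)
    hence "real (card (rich f S)) \<le> real (card (rich f S \<inter> Small s)) + real (card (rich f S - Small s))"
      by linarith
    hence "real K * real (card (rich f S)) \<le> real K * (real (card (rich f S \<inter> Small s)) + real (card (rich f S - Small s)))"
      using Kp by (intro mult_left_mono) auto
    hence "real s \<le> real K * real (card (rich f S \<inter> Small s)) + real K * real (card (rich f S - Small s))"
      using c unfolding s_def by (simp add: distrib_left)
    hence "real s \<le> 2 * real K * real (card (rich f S \<inter> Small s))" using hb by linarith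
    hence rle: "r s \<le> card (rich f S \<inter> Small s)" by (rule r_le)
    then obtain R where R: "R \<subseteq> rich f S \<inter> Small s" "card R = r s"
      by (meson obtain_subset_with_card_n)
    define T where "T = (\<lambda>jb\<in>R. SOME T. T \<subseteq> {y\<in>S. f (fst jb, y) = snd jb} \<and> card T = g0)"
    have Tp: "T jb \<subseteq> {y\<in>S. f (fst jb, y) = snd jb} \<and> card (T jb) = g0" if "jb \<in> R" for jb
    proof -
      have "jb \<in> rich f S" using that R by auto
      hence "g0 \<le> card {y\<in>S. f (fst jb, y) = snd jb}" unfolding rich_def by (cases jb) auto
      then obtain T0 where "T0 \<subseteq> {y\<in>S. f (fst jb, y) = snd jb}" "card T0 = g0"
        by (meson obtain_subset_with_card_n)
      hence "\<exists>T. T \<subseteq> {y\<in>S. f (fst jb, y) = snd jb} \<and> card T = g0" by blast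
      from someI_ex[OF this] show ?thesis unfolding T_def using that by simp
    qed
    have TT: "T \<in> TT R S" unfolding TT_def T_def using Tp
      by (auto simp: PiE_iff T_def)
    have "\<forall>jb\<in>R. \<forall>y\<in>T jb. f (fst jb, y) = snd jb" using Tp by blast
    hence fC: "f \<in> Con R T" unfolding Con_def using f by auto
    have i1: "s \<in> {1..nY}" using s1 s2 by simp
    have i2: "S \<in> SS s" unfolding SS_def s_def using S(1) by simp
    have i3: "R \<in> RR s" unfolding RR_def using R by simp
    show "f \<in> Wit" unfolding Wit_def using i1 i2 i3 TT fC by blast
  qed
  have finSS: "finite (SS s)" for s unfolding SS_def by (rule finite_subset[of _ "Pow {..<nY}"]) auto
  have finSmall: "finite (Small s)" for s unfolding Small_def by (rule finite_subset[OF _ finBlk]) auto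
  have finRR: "finite (RR s)" for s unfolding RR_def by (rule finite_subset[of _ "Pow (Small s)"]) (auto simp: finSmall)
  have cSS: "card (SS s) = nY choose s" for s unfolding SS_def by (simp add: n_subsets)
  have cRR: "card (RR s) \<le> N ^ r s" for s
  proof -
    have "card (RR s) = card (Small s) choose r s" unfolding RR_def by (simp add: n_subsets finSmall)
    also have "\<dots> \<le> card (Small s) ^ r s" by (rule choose_le_pow)
    also have "\<dots> \<le> N ^ r s"
    proof (rule power_mono)
      have "card (Small s) \<le> card Blk" unfolding Small_def by (rule card_mono[OF finBlk]) auto
      thus "card (Small s) \<le> N" using NB unfolding Blk_def by simp
    qed auto
    finally show ?thesis .
  qed
  have cTT: "card (TT R S) = (card S choose g0) ^ card R" if "finite R" "finite S" for R S
    unfolding TT_def using that by (simp add: card_PiE n_subsets)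
  have finTT: "finite (TT R S)" if "finite R" "finite S" for R S
    unfolding TT_def using that by (intro finite_PiE) auto
  define M where "M s = 6 * real s / real g0" for s :: nat
  have conb: "real (card (Con R T)) \<le> real (card Om) / M s ^ (g0 * r s)"
    if s: "1 \<le> s" and R: "R \<in> RR s" and S: "S \<in> SS s" and T: "T \<in> TT R S" for s S R T
  proof -
    have Mp: "M s > 0" unfolding M_def using s g0 by simp
    have RB: "R \<subseteq> Sigma {..<l} (\<lambda>j. {..<m j})" using R unfolding RR_def Small_def Blk_def by auto
    have Tj: "T jb \<subseteq> {..<nY} \<and> card (T jb) = g0" if "jb \<in> R" for jb
      using T S that unfolding TT_def SS_def by (auto simp: PiE_iff)
    have Mj: "M s \<le> real (m j)" if "(j,b) \<in> R" for j b
      using R that g0 unfolding RR_def Small_def M_def by (auto simp: divide_le_eq mult.commute)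
    have "real (card (Con R T)) * M s ^ (g0 * card R) \<le> real (card Om)"
      unfolding Con_def Om_def I_def
      by (rule con_card[OF RB, of T nY g0 "M s"]) (use Tj Mj Mp in auto)
    moreover have "card R = r s" using R unfolding RR_def by simp
    ultimately show ?thesis using Mp by (simp add: le_divide_eq)
  qed
  define tau where "tau s = real (nY choose s) * real (N ^ r s) * real ((s choose g0) ^ r s)
       * (real (card Om) / M s ^ (g0 * r s))" for s
  have level: "real (card (\<Union>S\<in>SS s. \<Union>R\<in>RR s. \<Union>T\<in>TT R S. Con R T)) \<le> tau s"
    if s: "1 \<le> s" for s
  proof -
    have "real (card (\<Union>S\<in>SS s. \<Union>R\<in>RR s. \<Union>T\<in>TT R S. Con R T))
        \<le> (\<Sum>S\<in>SS s. real (card (\<Union>R\<in>RR s. \<Union>T\<in>TT R S. Con R T)))"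
      by (rule card_UN_le_real[OF finSS])
    also have "\<dots> \<le> (\<Sum>S\<in>SS s. real (N ^ r s) * real ((s choose g0) ^ r s) * (real (card Om) / M s ^ (g0 * r s)))"
    proof (rule sum_mono)
      fix S assume S: "S \<in> SS s"
      have finS: "finite S" using S unfolding SS_def by (auto intro: finite_subset)
      have "real (card (\<Union>R\<in>RR s. \<Union>T\<in>TT R S. Con R T)) \<le> (\<Sum>R\<in>RR s. real (card (\<Union>T\<in>TT R S. Con R T)))"
        by (rule card_UN_le_real[OF finRR])
      also have "\<dots> \<le> (\<Sum>R\<in>RR s. real ((s choose g0) ^ r s) * (real (card Om) / M s ^ (g0 * r s)))"
      proof (rule sum_mono)
        fix R assume R: "R \<in> RR s"
        have finR: "finite R" using R finSmall unfolding RR_def by (auto intro: finite_subset)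
        have "real (card (\<Union>T\<in>TT R S. Con R T)) \<le> (\<Sum>T\<in>TT R S. real (card (Con R T)))"
          by (rule card_UN_le_real[OF finTT[OF finR finS]])
        also have "\<dots> \<le> (\<Sum>T\<in>TT R S. real (card Om) / M s ^ (g0 * r s))"
          by (rule sum_mono) (rule conb[OF s R S])
        also have "\<dots> = real ((s choose g0) ^ r s) * (real (card Om) / M s ^ (g0 * r s))"
          using cTT[OF finR finS] R S unfolding RR_def SS_def by simp
        finally show "real (card (\<Union>T\<in>TT R S. Con R T)) \<le> real ((s choose g0) ^ r s) * (real (card Om) / M s ^ (g0 * r s))" .
      qed
      also have "\<dots> = real (card (RR s)) * (real ((s choose g0) ^ r s) * (real (card Om) / M s ^ (g0 * r s)))"
        by simp
      also have "\<dots> \<le> real (N ^ r s) * (real ((s choose g0) ^ r s) * (real (card Om) / M s ^ (g0 * r s)))"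
        by (rule mult_right_mono) (use cRR[of s] in \<open>auto simp del: of_nat_power simp: M_def\<close>)
      finally show "real (card (\<Union>R\<in>RR s. \<Union>T\<in>TT R S. Con R T)) \<le> real (N ^ r s) * real ((s choose g0) ^ r s) * (real (card Om) / M s ^ (g0 * r s))"
        by (simp add: mult.assoc)
    qed
    also have "\<dots> = tau s" unfolding tau_def using cSS[of s] by (simp add: mult.assoc)
    finally show ?thesis .
  qed
  have taub: "tau s \<le> real (card Om) * (real N ^ (2*K+1) / 2 ^ g0)" if s: "1 \<le> s" "s \<le> nY" for s
  proof -
    define rr where "rr = r s"
    have rr1: "1 \<le> rr" unfolding rr_def by (rule r_pos[OF s(1)])
    have srr: "s \<le> 2 * K * rr" using r_ge[of s] unfolding rr_def
      by (metis of_nat_le_iff of_nat_mult of_nat_numeral)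
    have N1: "1 \<le> N" using s NY by simp
    have Np: "real N \<ge> 1" using N1 by simp
    have b1: "real (nY choose s) \<le> real N ^ (2 * K * rr)"
    proof -
      have "nY choose s \<le> nY ^ s" by (rule choose_le_pow)
      also have "\<dots> \<le> N ^ s" using NY by (rule power_mono) simp
      also have "\<dots> \<le> N ^ (2 * K * rr)" by (rule power_increasing[OF srr N1])
      finally show ?thesis by (metis of_nat_le_iff of_nat_power)
    qed
    have Mp: "M s > 0" unfolding M_def using s g0 by simp
    have iM: "inverse (M s) = real g0 / (6 * real s)" unfolding M_def by simp
    have b2: "real ((s choose g0) ^ rr) / M s ^ (g0 * rr) \<le> ((1/2) ^ g0) ^ rr"
    proof -
      have "real ((s choose g0) ^ rr) / M s ^ (g0 * rr) = (real (s choose g0) * inverse (M s) ^ g0) ^ rr"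
        by (simp add: power_mult power_mult_distrib divide_inverse power_inverse)
      also have "\<dots> = (real (s choose g0) * (real g0 / (6 * real s)) ^ g0) ^ rr" unfolding iM ..
      also have "\<dots> \<le> ((1/2) ^ g0) ^ rr"
        by (rule power_mono[OF choose_bound[OF s(1)]]) simp
      finally show ?thesis .
    qed
    define q where "q = real N ^ (2*K+1) * (1/2) ^ g0"
    have q0: "0 \<le> q" unfolding q_def by simp
    have q1: "q \<le> 1"
    proof -
      have "real N ^ (2*K+1) \<le> real N ^ (2*K+2)" using Np by (intro power_increasing) auto
      hence "real N ^ (2*K+1) < 2 ^ g0" using big by linarith
      thus ?thesis unfolding q_def by (simp add: power_one_over field_simps)
    qed
    have "tau s = real (nY choose s) * real N ^ rr * (real ((s choose g0) ^ rr) / M s ^ (g0 * rr)) * real (card Om)"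
      unfolding tau_def rr_def by simp
    also have "\<dots> \<le> real N ^ (2 * K * rr) * real N ^ rr * (((1/2) ^ g0) ^ rr) * real (card Om)"
      using b1 b2 Mp by (intro mult_right_mono mult_mono) auto
    also have "\<dots> = q ^ rr * real (card Om)"
      unfolding q_def by (simp add: power_mult_distrib power_mult[symmetric] power_add[symmetric] algebra_simps)
    also have "\<dots> \<le> q * real (card Om)"
    proof (rule mult_right_mono)
      show "q ^ rr \<le> q" using power_decreasing[OF rr1 q0 q1] by simp
    qed simp
    also have "\<dots> = real (card Om) * (real N ^ (2*K+1) / 2 ^ g0)" unfolding q_def by (simp add: power_one_over)
    finally show ?thesis .
  qed
  have WO: "Wit \<subseteq> Om" unfolding Wit_def Con_def by auto
  have "real (card Bad) \<le> real (card Wit)"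
    using card_mono[OF finite_subset[OF WO finOm] sub] by simp
  also have "\<dots> \<le> (\<Sum>s\<in>{1..nY}. real (card (\<Union>S\<in>SS s. \<Union>R\<in>RR s. \<Union>T\<in>TT R S. Con R T)))"
    unfolding Wit_def by (rule card_UN_le_real) simp
  also have "\<dots> \<le> (\<Sum>s\<in>{1..nY}. real (card Om) * (real N ^ (2*K+1) / 2 ^ g0))"
  proof (rule sum_mono)
    fix s assume "s \<in> {1..nY}"
    hence s: "1 \<le> s" "s \<le> nY" by auto
    show "real (card (\<Union>S\<in>SS s. \<Union>R\<in>RR s. \<Union>T\<in>TT R S. Con R T)) \<le> real (card Om) * (real N ^ (2*K+1) / 2 ^ g0)"
      using level[OF s(1)] taub[OF s] by (rule order.trans)
  qed
  also have "\<dots> = real nY * (real (card Om) * (real N ^ (2*K+1) / 2 ^ g0))" by simp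
  also have "\<dots> \<le> real N * (real (card Om) * (real N ^ (2*K+1) / 2 ^ g0))"
    by (rule mult_right_mono) (use NY in auto)
  also have "\<dots> = real (card Om) * (real N ^ (2*K+2) / 2 ^ g0)" by (simp add: field_simps)
  also have "\<dots> < real (card Om)"
  proof -
    have "real N ^ (2*K+2) / 2 ^ g0 < 1" using big by simp
    moreover have "real (card Om) > 0" using cOm by simp
    ultimately show ?thesis using mult_strict_left_mono[of "real N ^ (2*K+2) / 2 ^ g0" 1 "real (card Om)"] by simp
  qed
  finally have "card Bad < card Om" by simp
  have BO: "Bad \<subseteq> Om" unfolding Bad_def by auto
  have "\<not> Om \<subseteq> Bad"
  proof
    assume "Om \<subseteq> Bad"
    hence "card Om \<le> card Bad" by (rule card_mono[OF finite_subset[OF BO finOm]])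
    with \<open>card Bad < card Om\<close> show False by simp
  qed
  then obtain f where f: "f \<in> Om" "f \<notin> Bad" by blast
  show ?thesis
  proof (rule bexI[of _ f])
    show "f \<in> PiE ({..<l} \<times> {..<nY}) (\<lambda>(j,y). {..<m j})" using f(1) unfolding Om_def I_def by simp
    show "\<forall>S. S \<subseteq> {..<nY} \<and> S \<noteq> {} \<longrightarrow> real K * real (card {(j,b)\<in>Sigma {..<l} (\<lambda>j. {..<m j}). g0 \<le> card {y\<in>S. f (j,y) = b}}) < real (card S)"
      using f unfolding Bad_def rich_def Blk_def by auto
  qed
qed

lemma double_count:
  fixes E' :: "'a set set" and A :: "'a set"
  assumes "finite E'" "finite A" "\<And>e. e \<in> E' \<Longrightarrow> card (e \<inter> A) = 1"
  shows "(\<Sum>v\<in>A. card {e\<in>E'. v \<in> e}) = card E'"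
proof -
  have "(\<Sum>v\<in>A. card {e\<in>E'. v \<in> e}) = (\<Sum>v\<in>A. \<Sum>e\<in>E'. if v \<in> e then 1 else 0)"
    using assms(1) by (intro sum.cong refl) (simp add: sum.If_cases Int_def)
  also have "\<dots> = (\<Sum>e\<in>E'. \<Sum>v\<in>A. if v \<in> e then 1 else 0)" by (rule sum.swap)
  also have "\<dots> = (\<Sum>e\<in>E'. card (e \<inter> A))"
    using assms(2) by (intro sum.cong refl) (simp add: sum.If_cases Int_commute)
  also have "\<dots> = (\<Sum>e\<in>E'. 1)" using assms(3) by simp
  finally show ?thesis by simp
qed

lemma divmod_aux:
  fixes Wd j b :: nat
  assumes "b < Wd"
  shows "(j * Wd + b) div Wd = j" "(j * Wd + b) mod Wd = b"
  using assms by auto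

lemma graph_prop:
  fixes N nY l Wd g0 K :: nat and f :: "nat \<times> nat \<Rightarrow> nat" and m :: "nat \<Rightarrow> nat" and B :: real
  assumes f: "f \<in> PiE ({..<l} \<times> {..<nY}) (\<lambda>(j,y). {..<m j})"
    and good: "\<forall>S. S \<subseteq> {..<nY} \<and> S \<noteq> {} \<longrightarrow>
      real K * real (card {(j,b)\<in>Sigma {..<l} (\<lambda>j. {..<m j}). g0 \<le> card {y\<in>S. f (j,y) = b}}) < real (card S)"
    and mW: "\<And>j. m j \<le> Wd" and NN: "nY + l * Wd \<le> N"
    and Bg: "real g0 \<le> B"
  defines "E \<equiv> (\<lambda>(j,y). {y, nY + j * Wd + f (j,y)}) ` ({..<l} \<times> {..<nY})"
  shows "simple_graph {..<N} E" "card E = l * nY"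
    "\<forall>W E' (d'::real). subgraph W E' {..<N} E \<and> W \<noteq> {} \<and>
        (\<forall>v\<in>W. d' \<le> real (degree E' v) \<and> real (degree E' v) \<le> real K * d') \<longrightarrow> d' \<le> B"
proof -
  define xv where "xv j y = nY + j * Wd + f (j,y)" for j y
  have fl: "f (j,y) < m j" if "j < l" "y < nY" for j y using f that by (auto simp: PiE_iff)
  have fW: "f (j,y) < Wd" if "j < l" "y < nY" for j y using fl[OF that] mW[of j] by linarith
  have xv_ge: "nY \<le> xv j y" for j y unfolding xv_def by simp
  have xv_lt: "xv j y < N" if "j < l" "y < nY" for j y
  proof -
    have "j * Wd + f (j,y) < j * Wd + Wd" using fW[OF that] by simp
    also have "\<dots> = Suc j * Wd" by simp
    also have "\<dots> \<le> l * Wd" using that(1) by (intro mult_right_mono) auto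
    finally show ?thesis using NN unfolding xv_def by linarith
  qed
  have xv_div: "(xv j y - nY) div Wd = j" "(xv j y - nY) mod Wd = f (j,y)" if "j < l" "y < nY" for j y
    unfolding xv_def using divmod_aux[OF fW[OF that], of j] by simp_all
  have E_eq: "E = (\<lambda>(j,y). {y, xv j y}) ` ({..<l} \<times> {..<nY})" unfolding E_def xv_def by simp
  have Eform: "\<exists>j y. j < l \<and> y < nY \<and> e = {y, xv j y}" if "e \<in> E" for e
    using that unfolding E_eq by auto
  have "\<forall>e\<in>E. e \<subseteq> {..<N} \<and> card e = 2"
  proof
    fix e assume "e \<in> E"
    then obtain j y where jy: "j < l" "y < nY" "e = {y, xv j y}" using Eform by blast
    have "y < xv j y" using jy xv_ge[of j y] by linarith
    then show "e \<subseteq> {..<N} \<and> card e = 2" using jy xv_lt[OF jy(1,2)] NN by auto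
  qed
  then show "simple_graph {..<N} E" unfolding simple_graph_def by simp
  have inj: "inj_on (\<lambda>(j,y). {y, xv j y}) ({..<l} \<times> {..<nY})"
  proof (rule inj_onI, clarify)
    fix j y j' y' assume a: "j < l" "y < nY" "j' < l" "y' < nY" "{y, xv j y} = {y', xv j' y'}"
    have "y \<noteq> xv j' y'" using a(2) xv_ge[of j' y'] by linarith
    hence e1: "y = y'" and e2: "xv j y = xv j' y'" using a(5) by (auto simp: doubleton_eq_iff)
    have "j = j'" using xv_div(1)[OF a(1,2)] xv_div(1)[OF a(3,4)] e2 by simp
    then show "j = j' \<and> y = y'" using e1 by simp
  qed
  show "card E = l * nY" unfolding E_eq by (subst card_image[OF inj]) simp
  show "\<forall>W E' (d'::real). subgraph W E' {..<N} E \<and> W \<noteq> {} \<and>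
        (\<forall>v\<in>W. d' \<le> real (degree E' v) \<and> real (degree E' v) \<le> real K * d') \<longrightarrow> d' \<le> B"
  proof (intro allI impI)
    fix W E' and d' :: real
    assume "subgraph W E' {..<N} E \<and> W \<noteq> {} \<and>
        (\<forall>v\<in>W. d' \<le> real (degree E' v) \<and> real (degree E' v) \<le> real K * d')"
    hence WN: "W \<subseteq> {..<N}" and EE: "E' \<subseteq> E" and eW: "\<And>e. e \<in> E' \<Longrightarrow> e \<subseteq> W"
      and Wne: "W \<noteq> {}" and dl: "\<And>v. v \<in> W \<Longrightarrow> d' \<le> real (card {e\<in>E'. v \<in> e})"
      and du: "\<And>v. v \<in> W \<Longrightarrow> real (card {e\<in>E'. v \<in> e}) \<le> real K * d'"
      unfolding subgraph_def degree_def by auto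
    show "d' \<le> B"
    proof (rule ccontr)
      assume "\<not> d' \<le> B"
      hence dB: "B < d'" by simp
      have dpos: "0 < d'" using dB Bg by linarith
      define S where "S = {y\<in>W. y < nY}"
      define X where "X = {v\<in>W. nY \<le> v}"
      have finW: "finite W" using WN finite_subset by blast
      have finS: "finite S" "finite X" unfolding S_def X_def using finW by auto
      have finE: "finite E" unfolding E_eq by simp
      have finE': "finite E'" using finite_subset[OF EE finE] .
      have E'form: "\<exists>j y. j < l \<and> y < nY \<and> e = {y, xv j y} \<and> y \<in> W \<and> xv j y \<in> W" if eE: "e \<in> E'" for e
      proof -
        have eE2: "e \<in> E" using eE EE by blast
        obtain j y where "j < l" "y < nY" "e = {y, xv j y}" using Eform[OF eE2] by blast
        moreover have "e \<subseteq> W" using eW eE by blast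
        ultimately show ?thesis by auto
      qed
      have cS: "card (e \<inter> S) = 1" if eE: "e \<in> E'" for e
      proof -
        obtain j y where jy: "j < l" "y < nY" "e = {y, xv j y}" "y \<in> W" "xv j y \<in> W" using E'form[OF eE] by blast
        have "e \<inter> S = {y}" using jy xv_ge[of j y] unfolding S_def by auto
        thus ?thesis by simp
      qed
      have cX: "card (e \<inter> X) = 1" if eE: "e \<in> E'" for e
      proof -
        obtain j y where jy: "j < l" "y < nY" "e = {y, xv j y}" "y \<in> W" "xv j y \<in> W" using E'form[OF eE] by blast
        have "e \<inter> X = {xv j y}" using jy xv_ge[of j y] unfolding X_def by auto
        thus ?thesis by simp
      qed
      have sumS: "(\<Sum>v\<in>S. card {e\<in>E'. v \<in> e}) = card E'" by (rule double_count[OF finE' finS(1) cS])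
      have sumX: "(\<Sum>v\<in>X. card {e\<in>E'. v \<in> e}) = card E'" by (rule double_count[OF finE' finS(2) cX])
      have "d' * real (card S) = (\<Sum>v\<in>S. d')" by simp
      also have "\<dots> \<le> (\<Sum>v\<in>S. real (card {e\<in>E'. v \<in> e}))" by (rule sum_mono) (use dl in \<open>auto simp: S_def\<close>)
      also have "\<dots> = real (card E')" using sumS by (metis of_nat_sum)
      finally have lo: "d' * real (card S) \<le> real (card E')" .
      have "real (card E') = (\<Sum>v\<in>X. real (card {e\<in>E'. v \<in> e}))" using sumX by (metis of_nat_sum)
      also have "\<dots> \<le> (\<Sum>v\<in>X. real K * d')" by (rule sum_mono) (use du in \<open>auto simp: X_def\<close>)
      also have "\<dots> = d' * (real K * real (card X))" by simp
      finally have hi: "real (card E') \<le> d' * (real K * real (card X))" .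
      have SX: "real (card S) \<le> real K * real (card X)"
        using lo hi dpos by (meson mult_le_cancel_left_pos order.trans)
      have Sne: "S \<noteq> {}"
      proof -
        obtain v where v: "v \<in> W" using Wne by blast
        have "0 < real (card {e\<in>E'. v \<in> e})" using dl[OF v] dpos by linarith
        hence "{e\<in>E'. v \<in> e} \<noteq> {}" by (metis card.empty of_nat_0 less_irrefl)
        then obtain e where "e \<in> E'" by blast
        then obtain j y where "y < nY" "y \<in> W" using E'form by blast
        thus ?thesis unfolding S_def by blast
      qed
      define rich where "rich = {(j,b)\<in>Sigma {..<l} (\<lambda>j. {..<m j}). g0 \<le> card {y\<in>S. f (j,y) = b}}"
      define phi where "phi x = ((x - nY) div Wd, (x - nY) mod Wd)" for x
      have inj_phi: "inj_on phi X"
      proof (rule inj_onI)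
        fix x x' assume "x \<in> X" "x' \<in> X" "phi x = phi x'"
        hence "nY \<le> x" "nY \<le> x'" "(x - nY) div Wd = (x' - nY) div Wd" "(x - nY) mod Wd = (x' - nY) mod Wd"
          unfolding X_def phi_def by auto
        thus "x = x'" by (metis div_mod_decomp le_add_diff_inverse)
      qed
      have phi_rich: "phi x \<in> rich" if x: "x \<in> X" for x
      proof -
        have xW: "x \<in> W" and xn: "nY \<le> x" using x unfolding X_def by auto
        have "0 < real (card {e\<in>E'. x \<in> e})" using dl[OF xW] dpos by linarith
        hence "{e\<in>E'. x \<in> e} \<noteq> {}" by (metis card.empty of_nat_0 less_irrefl)
        then obtain e0 where e0: "e0 \<in> E'" "x \<in> e0" by blast
        obtain j0 y0 where jy0: "j0 < l" "y0 < nY" "e0 = {y0, xv j0 y0}" using E'form[OF e0(1)] by blast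
        have xeq: "x = xv j0 y0" using e0(2) jy0 xn by auto
        define b0 where "b0 = f (j0, y0)"
        have phix: "phi x = (j0, b0)" unfolding phi_def xeq b0_def using xv_div[OF jy0(1,2)] by simp
        have sub: "{e\<in>E'. x \<in> e} \<subseteq> (\<lambda>y. {y, x}) ` {y\<in>S. f (j0,y) = b0}"
        proof
          fix e assume e: "e \<in> {e\<in>E'. x \<in> e}"
          obtain j1 y1 where jy1: "j1 < l" "y1 < nY" "e = {y1, xv j1 y1}" "y1 \<in> W"
            using E'form[of e] e by blast
          have "x = xv j1 y1" using e jy1 xn by auto
          hence "j1 = j0" "f (j1, y1) = b0"
            using xv_div[OF jy1(1,2)] xv_div[OF jy0(1,2)] xeq unfolding b0_def by auto
          hence "y1 \<in> {y\<in>S. f (j0,y) = b0}" using jy1 unfolding S_def by auto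
          moreover have "e = {y1, x}" using jy1 \<open>x = xv j1 y1\<close> by simp
          ultimately show "e \<in> (\<lambda>y. {y, x}) ` {y\<in>S. f (j0,y) = b0}" by blast
        qed
        have "card {e\<in>E'. x \<in> e} \<le> card ((\<lambda>y. {y, x}) ` {y\<in>S. f (j0,y) = b0})"
          by (rule card_mono[OF _ sub]) (use finS in auto)
        also have "\<dots> \<le> card {y\<in>S. f (j0,y) = b0}" by (rule card_image_le) (use finS in auto)
        finally have "d' \<le> real (card {y\<in>S. f (j0,y) = b0})" using dl[OF xW] by linarith
        hence "g0 \<le> card {y\<in>S. f (j0,y) = b0}" using dB Bg by linarith
        moreover have "b0 < m j0" unfolding b0_def by (rule fl[OF jy0(1,2)])
        ultimately show ?thesis unfolding rich_def phix using jy0(1) by simp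
      qed
      have finR: "finite rich" unfolding rich_def by (rule finite_subset[of _ "Sigma {..<l} (\<lambda>j. {..<m j})"]) auto
      have "card X = card (phi ` X)" using card_image[OF inj_phi] by simp
      also have "\<dots> \<le> card rich" by (rule card_mono[OF finR]) (use phi_rich in auto)
      finally have "real (card S) \<le> real K * real (card rich)"
        using SX by (smt (verit) mult_left_mono of_nat_0_le_iff of_nat_le_iff)
      moreover have "real K * real (card rich) < real (card S)"
      proof -
        have Ssub: "S \<subseteq> {..<nY}" unfolding S_def by auto
        show ?thesis using good Ssub Sne unfolding rich_def by blast
      qed
      ultimately show False by simp
    qed
  qed
qed

lemma eventual_facts:
  fixes e :: real and K :: nat
  assumes "0 < e" "e < 1"
  shows "\<exists>N0::nat. \<forall>N\<ge>N0. 1 \<le> real N \<and> 3 \<le> (1 - e) * log 2 (real N) - 2 \<and> 1 \<le> log 2 (real N)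
      \<and> (2 * real K + 4) * (log 2 (real N))^2 \<le> real N powr e"
proof -
  have e1: "\<forall>\<^sub>F x in at_top. (1::real) \<le> x" by real_asymp
  have e2: "\<forall>\<^sub>F x in at_top. 3 \<le> (1 - e) * (ln x / ln 2) - 2" using assms by real_asymp
  have e3: "\<forall>\<^sub>F x in at_top. 1 \<le> ln x / ln (2::real)" by real_asymp
  have e4: "\<forall>\<^sub>F x in at_top. (2 * real K + 4) * (ln x / ln 2)^2 \<le> x powr e" using assms by real_asymp
  have "\<forall>\<^sub>F x in at_top. 1 \<le> x \<and> 3 \<le> (1 - e) * log 2 x - 2 \<and> 1 \<le> log 2 x
      \<and> (2 * real K + 4) * (log 2 x)^2 \<le> x powr e"
    using e1 e2 e3 e4 unfolding log_def by eventually_elim auto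
  hence "\<forall>\<^sub>F N in sequentially. 1 \<le> real N \<and> 3 \<le> (1 - e) * log 2 (real N) - 2 \<and> 1 \<le> log 2 (real N)
      \<and> (2 * real K + 4) * (log 2 (real N))^2 \<le> real N powr e"
    using filterlim_real_sequentially by (rule eventually_compose_filterlim)
  thus ?thesis unfolding eventually_sequentially by blast
qed

theorem propositionA1:
  fixes \<epsilon> :: real and K :: nat
  assumes "0 < \<epsilon>" "\<epsilon> < 1" "K \<ge> 1"
  shows "\<exists>N0::nat. \<forall>N\<ge>N0. \<exists>E :: nat set set.
           simple_graph {..<N} E \<and>
           avg_degree {..<N} E \<ge> real N powr \<epsilon> \<and>
           (\<forall>W E' (d'::real). subgraph W E' {..<N} E \<and> W \<noteq> {} \<and>
                (\<forall>v\<in>W. d' \<le> real (degree E' v) \<and> real (degree E' v) \<le> real K * d')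
              \<longrightarrow> d' \<le> 64 * real K ^ 3 * real N powr \<epsilon> /
                       real_of_int \<lfloor>(1 - \<epsilon>) * log 2 (real N) - 2\<rfloor>)"
proof -
  obtain N0 :: nat where N0: "\<And>N. N \<ge> N0 \<Longrightarrow> 1 \<le> real N \<and> 3 \<le> (1 - \<epsilon>) * log 2 (real N) - 2 \<and> 1 \<le> log 2 (real N)
      \<and> (2 * real K + 4) * (log 2 (real N))^2 \<le> real N powr \<epsilon>"
    using eventual_facts[OF assms(1,2), of K] by blast
  show ?thesis
  proof (rule exI[of _ N0], intro allI impI)
    fix N :: nat assume "N0 \<le> N"
    note h = N0[OF this]
    define x where "x = real N"
    have x1: "1 \<le> x" and A1: "3 \<le> (1 - \<epsilon>) * log 2 x - 2" and A2: "1 \<le> log 2 x"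
      and A3: "(2 * real K + 4) * (log 2 x)^2 \<le> x powr \<epsilon>" using h unfolding x_def by auto
    have Kr: "1 \<le> real K" using assms(3) by simp
    define d where "d = x powr \<epsilon>"
    define Lr where "Lr = (1 - \<epsilon>) * log 2 x - 2"
    define L where "L = nat \<lfloor>Lr\<rfloor>"
    have LrL: "real_of_int \<lfloor>Lr\<rfloor> = real L" unfolding L_def using A1 Lr_def by simp
    have L_le: "real L \<le> Lr" using LrL by linarith
    have L_ge: "Lr - 1 \<le> real L" using LrL by linarith
    have L2: "2 \<le> real L" using L_ge A1 Lr_def by linarith
    have Lpos: "0 < L" using L2 by simp
    have Lr_log: "Lr \<le> log 2 x" unfolding Lr_def using A2 assms(1) by (simp add: algebra_simps)
    have dpos: "0 < d" unfolding d_def using x1 by simp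
    have d_log: "log 2 x \<le> d"
    proof -
      have "log 2 x \<le> (log 2 x)^2" using A2 by (simp add: power2_eq_square)
      also have "\<dots> \<le> (2 * real K + 4) * (log 2 x)^2" by (simp add: mult_le_cancel_right1)
      finally show ?thesis using A3 unfolding d_def by linarith
    qed
    have dL: "real L \<le> d" using L_le Lr_log d_log by linarith
    have dL1: "1 \<le> d / real L" using dL L2 by simp
    have pow2L: "4 * d * real ((2::nat)^L) \<le> x"
    proof -
      have "real ((2::nat)^L) = 2 powr real L" by (simp add: powr_realpow)
      also have "\<dots> \<le> 2 powr Lr" using L_le by (intro powr_mono) auto
      also have "\<dots> = 2 powr ((1 - \<epsilon>) * log 2 x) / 2 powr 2" unfolding Lr_def by (rule powr_diff)
      also have "2 powr ((1 - \<epsilon>) * log 2 x) = (2 powr (log 2 x)) powr (1 - \<epsilon>)"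
        by (simp add: powr_powr mult.commute)
      also have "\<dots> = x powr (1 - \<epsilon>)" using x1 by simp
      also have "\<dots> = x / d" unfolding d_def using x1 by (simp add: powr_diff)
      finally have "real ((2::nat)^L) \<le> x / d / 4" by simp
      thus ?thesis using dpos by (simp add: field_simps)
    qed
    define t where "t = nat \<lceil>d / real L\<rceil>"
    have y0: "0 \<le> d / real L" using dpos L2 by simp
    have z: "0 \<le> \<lceil>d / real L\<rceil>" using y0 by linarith
    have tc: "real t = of_int \<lceil>d / real L\<rceil>" unfolding t_def using z by simp
    have t_ge: "d / real L \<le> real t" unfolding tc by (rule le_of_int_ceiling)
    have t_le: "real t \<le> d / real L + 1" unfolding tc using ceiling_correct[of "d / real L"] by linarith
    define l where "l = t * L"
    have l_ge: "d \<le> real l" unfolding l_def using t_ge L2 by (simp add: divide_le_eq)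
    have l_le: "real l \<le> 2 * d"
    proof -
      have "real l = real t * real L" unfolding l_def by simp
      also have "\<dots> \<le> (d / real L + 1) * real L" using t_le L2 by (intro mult_right_mono) auto
      also have "\<dots> = d + real L" using L2 by (simp add: field_simps)
      finally show ?thesis using dL by linarith
    qed
    define Wd where "Wd = (2::nat)^L"
    have lW: "2 * real (l * Wd) \<le> x"
    proof -
      have "2 * real (l * Wd) = 2 * real l * real Wd" by simp
      also have "\<dots> \<le> 2 * (2 * d) * real Wd" using l_le by (intro mult_right_mono) auto
      also have "\<dots> = 4 * d * real Wd" by simp
      also have "\<dots> \<le> x" using pow2L unfolding Wd_def .
      finally show ?thesis .
    qed
    have lWN: "2 * (l * Wd) \<le> N" using lW unfolding x_def by linarith
    define nY where "nY = N - l * Wd"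
    have nYN: "nY + l * Wd = N" "nY \<le> N" "N \<le> 2 * nY" unfolding nY_def using lWN by auto
    define m where "m j = (2::nat)^(j mod L)" for j
    have m_pos: "0 < m j" for j unfolding m_def by simp
    have mW: "m j \<le> Wd" for j unfolding m_def Wd_def using Lpos by (intro power_increasing) auto
    define B where "B = 64 * real K ^ 3 * d / real L"
    define g0 where "g0 = nat \<lfloor>B\<rfloor>"
    have B0: "0 \<le> B" unfolding B_def using dpos L2 by simp
    have g0B: "real g0 \<le> B" "B - 1 < real g0" unfolding g0_def using B0 by linarith+
    have K3: "real K \<le> real K ^ 3"
    proof -
      have "1 * 1 \<le> real K * real K" using Kr by (intro mult_mono) auto
      hence "real K * 1 \<le> real K * (real K * real K)" using Kr by (intro mult_left_mono) auto
      thus ?thesis by (simp add: power3_eq_cube)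
    qed
    have BK: "64 * real K * (d / real L) \<le> B" unfolding B_def using K3 dpos L2
      by (simp add: mult_right_mono divide_right_mono)
    have g0t: "24 * real K * real t \<le> real g0"
    proof -
      have "24 * real K * real t \<le> 24 * real K * (d / real L + 1)" using t_le Kr by (intro mult_left_mono) auto
      also have "\<dots> \<le> 64 * real K * (d / real L) - 1"
      proof -
        have ky: "real K \<le> real K * (d / real L)" using dL1 Kr mult_left_mono[of 1 "d / real L" "real K"] by simp
        have e1: "24 * real K * (d / real L + 1) = 24 * (real K * (d / real L)) + 24 * real K" by (simp add: algebra_simps)
        have e2: "64 * real K * (d / real L) = 64 * (real K * (d / real L))" by simp
        define a where "a = real K * (d / real L)"
        have "24 * a + 24 * real K \<le> 64 * a - 1" using ky Kr unfolding a_def[symmetric] by linarith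
        thus ?thesis unfolding e1 e2 a_def .
      qed
      also have "\<dots> \<le> B - 1" using BK by linarith
      finally show ?thesis using g0B by linarith
    qed
    have g0_1: "1 \<le> g0"
    proof -
      have "real t \<ge> 1" using t_ge dL1 by linarith
      hence "1 * 1 \<le> real K * real t" using Kr by (intro mult_mono) auto
      hence "24 \<le> real g0" using g0t by linarith
      thus ?thesis by simp
    qed
    have big: "real N ^ (2*K+2) < 2 ^ g0"
    proof -
      have "d / real L \<ge> d / log 2 x" using L_le Lr_log L2 dpos by (intro divide_left_mono) auto
      moreover have "d / log 2 x \<ge> (2 * real K + 4) * log 2 x"
        using A3 A2 unfolding d_def by (simp add: le_divide_eq power2_eq_square mult.assoc)
      ultimately have dd: "d / real L \<ge> (2 * real K + 4) * log 2 x" by linarith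
      have "(64::real) * (d / real L) \<le> (64 * real K) * (d / real L)" using Kr y0 by (intro mult_right_mono) auto
      hence "B \<ge> 64 * ((2 * real K + 4) * log 2 x)" using BK dd by linarith
      moreover have e1: "64 * ((2 * real K + 4) * log 2 x) = 128 * (real K * log 2 x) + 256 * log 2 x"
        by (simp add: algebra_simps)
      moreover have e2: "(2 * real K + 2) * log 2 x = 2 * (real K * log 2 x) + 2 * log 2 x"
        by (simp add: algebra_simps)
      moreover have "0 \<le> real K * log 2 x" using A2 by simp
      ultimately have "real g0 > (2 * real K + 2) * log 2 x" using g0B A2 by linarith
      hence "2 powr ((2 * real K + 2) * log 2 x) < 2 powr real g0" by (intro powr_less_mono) auto
      moreover have "2 powr ((2 * real K + 2) * log 2 x) = x ^ (2*K+2)"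
      proof -
        have "2 powr ((2 * real K + 2) * log 2 x) = (2 powr log 2 x) powr (2 * real K + 2)"
          by (simp add: powr_powr mult.commute)
        also have "\<dots> = x powr real (2*K+2)" using x1 by (simp add: add.commute)
        also have "\<dots> = x ^ (2*K+2)" using x1 by (intro powr_realpow) simp
        finally show ?thesis .
      qed
      moreover have "2 powr real g0 = 2 ^ g0" by (simp add: powr_realpow)
      ultimately show ?thesis unfolding x_def by simp
    qed
    have det: "2 * real K * real (\<Sum>j\<in>{j. j<l \<and> real g0 * real (m j) < 6 * real s}. m j) \<le> real s"
      if s1: "1 \<le> s" for s
    proof -
      define P where "P i = (real g0 * real ((2::nat)^i) < 6 * real s)" for i
      have "(\<Sum>j\<in>{j. j<l \<and> real g0 * real (m j) < 6 * real s}. m j)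
          = (\<Sum>j<t*L. (\<lambda>i. if P i then 2^i else 0) (j mod L))"
        unfolding l_def m_def P_def by (simp add: sum.If_cases Collect_conj_eq lessThan_def Int_commute)
      also have "\<dots> = t * (\<Sum>i<L. if P i then 2^i else 0)" by (rule sum_mod_rep)
      also have "(\<Sum>i<L. if P i then (2::nat)^i else 0) = (\<Sum>i\<in>{i. i<L \<and> real (2^i) < 6 * real s / real g0}. 2^i)"
        unfolding P_def using g0_1 by (simp add: sum.If_cases Collect_conj_eq lessThan_def Int_commute
            pos_less_divide_eq mult.commute)
      finally have eq: "(\<Sum>j\<in>{j. j<l \<and> real g0 * real (m j) < 6 * real s}. m j)
          = t * (\<Sum>i\<in>{i. i<L \<and> real (2^i) < 6 * real s / real g0}. 2^i)" .
      have gs: "real (\<Sum>i\<in>{i. i<L \<and> real (2^i) < 6 * real s / real g0}. (2::nat)^i) \<le> 2 * (6 * real s / real g0)"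
        by (rule geom_sub) simp
      have "2 * real K * real (\<Sum>j\<in>{j. j<l \<and> real g0 * real (m j) < 6 * real s}. m j)
          = 2 * real K * real t * real (\<Sum>i\<in>{i. i<L \<and> real (2^i) < 6 * real s / real g0}. (2::nat)^i)"
        unfolding eq by simp
      also have "\<dots> \<le> 2 * real K * real t * (2 * (6 * real s / real g0))"
        using gs Kr by (intro mult_left_mono) auto
      also have "\<dots> = (24 * real K * real t) * real s / real g0" by (simp add: field_simps)
      also have "\<dots> \<le> real g0 * real s / real g0" using g0t by (intro divide_right_mono mult_right_mono) auto
      also have "\<dots> = real s" using g0_1 by simp
      finally show ?thesis .
    qed
    have NB: "card (Sigma {..<l} (\<lambda>j. {..<m j})) \<le> N"
    proof -
      have "card (Sigma {..<l} (\<lambda>j. {..<m j})) = (\<Sum>j<l. m j)" by simp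
      also have "\<dots> \<le> (\<Sum>j<l. Wd)" by (rule sum_mono) (rule mW)
      also have "\<dots> = l * Wd" by simp
      finally show ?thesis using nYN by linarith
    qed
    obtain f where f: "f \<in> PiE ({..<l} \<times> {..<nY}) (\<lambda>(j,y). {..<m j})"
      and good: "\<forall>S. S \<subseteq> {..<nY} \<and> S \<noteq> {} \<longrightarrow>
        real K * real (card {(j,b)\<in>Sigma {..<l} (\<lambda>j. {..<m j}). g0 \<le> card {y\<in>S. f (j,y) = b}}) < real (card S)"
      using counting[OF m_pos assms(3) g0_1 det nYN(2) NB big] by blast
    define E where "E = (\<lambda>(j,y). {y, nY + j * Wd + f (j,y)}) ` ({..<l} \<times> {..<nY})"
    have NN: "nY + l * Wd \<le> N" using nYN by simp
    note GP = graph_prop[OF f good mW NN g0B(1), folded E_def]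
    show "\<exists>E :: nat set set.
           simple_graph {..<N} E \<and>
           avg_degree {..<N} E \<ge> real N powr \<epsilon> \<and>
           (\<forall>W E' (d'::real). subgraph W E' {..<N} E \<and> W \<noteq> {} \<and>
                (\<forall>v\<in>W. d' \<le> real (degree E' v) \<and> real (degree E' v) \<le> real K * d')
              \<longrightarrow> d' \<le> 64 * real K ^ 3 * real N powr \<epsilon> /
                       real_of_int \<lfloor>(1 - \<epsilon>) * log 2 (real N) - 2\<rfloor>)"
    proof (intro exI conjI)
      show "simple_graph {..<N} E" by (rule GP(1))
      show "real N powr \<epsilon> \<le> avg_degree {..<N} E"
      proof -
        have Np: "0 < real N" using x1 unfolding x_def by simp
        have "d * real N \<le> real l * real N" using l_ge Np by (intro mult_right_mono) auto
        also have "\<dots> \<le> real l * (2 * real nY)" using nYN(3) by (intro mult_left_mono) auto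
        also have "\<dots> = 2 * real (card E)" using GP(2) by simp
        finally have "d \<le> 2 * real (card E) / real N" using Np by (simp add: le_divide_eq)
        thus ?thesis unfolding avg_degree_def d_def x_def by simp
      qed
      have eqB: "64 * real K ^ 3 * real N powr \<epsilon> / real_of_int \<lfloor>(1 - \<epsilon>) * log 2 (real N) - 2\<rfloor> = B"
        unfolding B_def d_def using LrL unfolding Lr_def x_def by simp
      show "\<forall>W E' (d'::real). subgraph W E' {..<N} E \<and> W \<noteq> {} \<and>
                (\<forall>v\<in>W. d' \<le> real (degree E' v) \<and> real (degree E' v) \<le> real K * d')
              \<longrightarrow> d' \<le> 64 * real K ^ 3 * real N powr \<epsilon> /
                       real_of_int \<lfloor>(1 - \<epsilon>) * log 2 (real N) - 2\<rfloor>"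
        unfolding eqB by (rule GP(3))
    qed
  qed
qed

end
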